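(* Let $n\geq 4$ and let $\mathcal{T}_n$ denote the set of trees on $n$ vertices. If $T\in\mathcal{T}_n$ and $T$ is not isomorphic to the balanced double star $S_{\lfloor\frac{n-2}{2}\rfloor,\lceil\frac{n-2}{2}\rceil}$, then $T$ is not maximal with respect to $e^{M_2}$ over $\mathcal{T}_n$, i.e., there exists $T''\in\mathcal{T}_n$ with $e^{M_2}(T'')>e^{M_2}(T)$.
   Context: For a tree (graph) $G$ with edge set $E(G)$ and vertex degrees $d_G(v)$, the exponential of the second Zagreb index is $e^{M_2}(G)=\sum_{uv\in E(G)} e^{d_G(u)d_G(v)}$. For integers $x,y\geq 1$, the double star $S_{x,y}$ is the tree on $x+y+2$ vertices with exactly two non-pendent vertices, of degrees $x+1$ and $y+1$ (these two vertices are adjacent, the first has $x$ pendant neighbours and the second has $y$ pendant neighbours). *)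

theory Defs
  imports Complex_Main
begin

definition simple_graph :: "'a set \<Rightarrow> 'a set set \<Rightarrow> bool" where
  "simple_graph V E \<longleftrightarrow> finite V \<and>
     (\<forall>e\<in>E. \<exists>u v. e = {u, v} \<and> u \<noteq> v \<and> u \<in> V \<and> v \<in> V)"

definition adj :: "'a set set \<Rightarrow> 'a \<Rightarrow> 'a \<Rightarrow> bool" where
  "adj E u v \<longleftrightarrow> {u, v} \<in> E \<and> u \<noteq> v"

definition connected_graph :: "'a set \<Rightarrow> 'a set set \<Rightarrow> bool" where
  "connected_graph V E \<longleftrightarrow> (\<forall>u\<in>V. \<forall>v\<in>V. (adj E)\<^sup>*\<^sup>* u v)"

definition is_cycle :: "'a set set \<Rightarrow> 'a list \<Rightarrow> bool" where
  "is_cycle E vs \<longleftrightarrow> length vs \<ge> 3 \<and> distinct vs \<and>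
     (\<forall>i. Suc i < length vs \<longrightarrow> adj E (vs ! i) (vs ! Suc i)) \<and>
     adj E (last vs) (hd vs)"

definition is_tree :: "'a set \<Rightarrow> 'a set set \<Rightarrow> bool" where
  "is_tree V E \<longleftrightarrow> simple_graph V E \<and> V \<noteq> {} \<and> connected_graph V E \<and>
     \<not> (\<exists>vs. is_cycle E vs)"

definition graph_iso :: "'a set \<Rightarrow> 'a set set \<Rightarrow> 'b set \<Rightarrow> 'b set set \<Rightarrow> bool" where
  "graph_iso V E W F \<longleftrightarrow> (\<exists>f. bij_betw f V W \<and>
     (\<forall>u\<in>V. \<forall>v\<in>V. {u, v} \<in> E \<longleftrightarrow> {f u, f v} \<in> F))"

definition degree :: "'a set set \<Rightarrow> 'a \<Rightarrow> nat" where
  "degree E v = card {e\<in>E. v \<in> e}"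

definition expM2 :: "'a set set \<Rightarrow> real" where
  "expM2 E = (\<Sum>e\<in>E. exp (\<Prod>v\<in>e. real (degree E v)))"

text \<open>Double star S_{x,y} on vertices {0..<x+y+2}: vertex 0 (degree x+1) is adjacent
to the pendants 1..x and to vertex x+1; vertex x+1 (degree y+1) is adjacent to the
pendants x+2..x+y+1.\<close>
definition double_star_edges :: "nat \<Rightarrow> nat \<Rightarrow> nat set set" where
  "double_star_edges x y =
     {{0, i} | i. 1 \<le> i \<and> i \<le> x + 1} \<union> {{x + 1, j} | j. x + 2 \<le> j \<and> j \<le> x + y + 1}"

end

theory Submission
  imports Defs
begin


lemma adj_sym: "adj E u v = adj E v u"
  unfolding adj_def by (auto simp: insert_commute)

lemma adj_in_V: "simple_graph V E \<Longrightarrow> adj E u v \<Longrightarrow> u \<in> V \<and> v \<in> V"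
  unfolding simple_graph_def adj_def by (metis doubleton_eq_iff)

lemma finite_E: "simple_graph V E \<Longrightarrow> finite E"
proof -
  assume s: "simple_graph V E"
  hence "E \<subseteq> Pow V" unfolding simple_graph_def by auto
  moreover have "finite V" using s unfolding simple_graph_def by auto
  ultimately show ?thesis by (meson finite_Pow_iff rev_finite_subset)
qed

lemma degree_eq: assumes s: "simple_graph V E"
  shows "degree E x = card {y. adj E x y}"
proof -
  have "{e\<in>E. x \<in> e} = (\<lambda>y. {x,y}) ` {y. adj E x y}"
  proof
    show "{e \<in> E. x \<in> e} \<subseteq> (\<lambda>y. {x, y}) ` {y. adj E x y}"
    proof
      fix e assume "e \<in> {e \<in> E. x \<in> e}"
      then obtain p q where "e = {p,q}" "p \<noteq> q" "e \<in> E" "x \<in> e" using s unfolding simple_graph_def by auto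
      thus "e \<in> (\<lambda>y. {x, y}) ` {y. adj E x y}" unfolding adj_def
        by (auto simp: insert_commute)
    qed
  qed (auto simp: adj_def)
  moreover have "inj_on (\<lambda>y. {x,y}) {y. adj E x y}"
    by (auto simp: inj_on_def doubleton_eq_iff adj_def)
  ultimately show ?thesis unfolding degree_def by (simp add: card_image)
qed

lemma finite_N: "simple_graph V E \<Longrightarrow> finite {y. adj E x y}"
proof -
  assume s: "simple_graph V E"
  have "{y. adj E x y} \<subseteq> V" using adj_in_V[OF s] by auto
  thus ?thesis using s unfolding simple_graph_def by (meson rev_finite_subset)
qed

lemma cyc3: "adj E x y \<Longrightarrow> adj E y z \<Longrightarrow> adj E z x \<Longrightarrow> is_cycle E [x,y,z]"
  unfolding is_cycle_def
  apply (auto simp: less_Suc_eq nth_Cons')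
  by (auto simp: adj_def)

lemma cyc4: "adj E x y \<Longrightarrow> adj E y z \<Longrightarrow> adj E z w \<Longrightarrow> adj E w x \<Longrightarrow> distinct [x,y,z,w]
   \<Longrightarrow> is_cycle E [x,y,z,w]"
  unfolding is_cycle_def
  by (auto simp: less_Suc_eq nth_Cons')



lemma tree_simple: "is_tree V E \<Longrightarrow> simple_graph V E" unfolding is_tree_def by auto
lemma tree_nocyc: "is_tree V E \<Longrightarrow> \<not> is_cycle E vs" unfolding is_tree_def by auto

lemma T1: assumes t: "is_tree V E" and uv: "adj E u v"
  shows "{y. adj E u y} \<inter> {y. adj E v y} = {}"
proof (rule ccontr)
  assume "{y. adj E u y} \<inter> {y. adj E v y} \<noteq> {}"
  then obtain w where "adj E u w" "adj E v w" by auto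
  hence "is_cycle E [u,v,w]" using uv cyc3 adj_sym by metis
  thus False using tree_nocyc[OF t] by auto
qed

lemma T2: assumes t: "is_tree V E" and uv: "adj E u v"
  shows "card {y. adj E u y} + card {y. adj E v y} \<le> card V"
proof -
  have s: "simple_graph V E" using tree_simple[OF t] .
  have "card {y. adj E u y} + card {y. adj E v y} = card ({y. adj E u y} \<union> {y. adj E v y})"
    using T1[OF t uv] finite_N[OF s] by (simp add: card_Un_disjoint)
  also have "\<dots> \<le> card V"
    apply (rule card_mono)
    using s unfolding simple_graph_def apply simp
    using adj_in_V[OF s] by auto
  finally show ?thesis .
qed

lemma T3: assumes t: "is_tree V E" and uv: "adj E u v"
  and eq: "card {y. adj E u y} + card {y. adj E v y} = card V"
  and xy: "adj E x y"
  shows "x \<in> {u,v} \<or> y \<in> {u,v}"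
proof (rule ccontr)
  assume nx: "\<not> (x \<in> {u,v} \<or> y \<in> {u,v})"
  have s: "simple_graph V E" using tree_simple[OF t] .
  have fV: "finite V" using s unfolding simple_graph_def by simp
  have sub: "{y. adj E u y} \<union> {y. adj E v y} \<subseteq> V" using adj_in_V[OF s] by auto
  have "card ({y. adj E u y} \<union> {y. adj E v y}) = card V"
    using T1[OF t uv] finite_N[OF s] eq by (simp add: card_Un_disjoint)
  hence U: "{y. adj E u y} \<union> {y. adj E v y} = V" using card_subset_eq[OF fV sub] by simp
  have xV: "x \<in> V" "y \<in> V" using adj_in_V[OF s xy] by auto
  have xy': "x \<noteq> y" using xy unfolding adj_def by auto
  have uvne: "u \<noteq> v" using uv unfolding adj_def by auto
  have nc: "\<And>vs. \<not> is_cycle E vs" using tree_nocyc[OF t] by auto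
  show False
  proof (cases "adj E u x")
    case ux: True
    show ?thesis
    proof (cases "adj E u y")
      case True
      thus ?thesis using cyc3[of E u x y] ux xy adj_sym nc by metis
    next
      case False
      hence "adj E v y" using U xV by auto
      hence "adj E y v" using adj_sym by metis
      moreover have "adj E v u" using uv adj_sym by metis
      ultimately show ?thesis using cyc4[of E u x y v] ux xy nc nx xy' uvne by auto
    qed
  next
    case nux: False
    hence vx: "adj E v x" using U xV by auto
    show ?thesis
    proof (cases "adj E v y")
      case True
      thus ?thesis using cyc3[of E v x y] vx xy adj_sym nc by metis
    next
      case False
      hence "adj E u y" using U xV by auto
      hence "adj E y u" using adj_sym by metis
      thus ?thesis using cyc4[of E v x y u] vx xy uv nc nx xy' uvne by auto
    qed
  qed
qed

lemma T4: assumes t: "is_tree V E" and uv: "adj E u v"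
  and eq: "card {y. adj E u y} + card {y. adj E v y} = card V"
  and uw: "adj E u w" and wv: "w \<noteq> v"
  shows "{y. adj E w y} = {u}"
proof
  have "adj E w u" using uw adj_sym by metis
  thus "{u} \<subseteq> {y. adj E w y}" by auto
  show "{y. adj E w y} \<subseteq> {u}"
  proof
    fix z assume z: "z \<in> {y. adj E w y}"
    hence "w \<in> {u,v} \<or> z \<in> {u,v}" using T3[OF t uv eq] by auto
    moreover have "w \<noteq> u" using uw unfolding adj_def by auto
    moreover have "z \<noteq> v"
    proof
      assume "z = v"
      hence "adj E v w" using z adj_sym by (metis mem_Collect_eq)
      thus False using T1[OF t uv] uw by auto
    qed
    ultimately show "z \<in> {u}" using wv by auto
  qed
qed



lemma e27: "exp 1 > (259/100::real)"
proof -
  have "exp (1::real) = exp (1/10) ^ 10" using exp_of_nat_mult[of 10 "1/10::real"] by simp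
  moreover have "exp (1/10::real) \<ge> 1 + 1/10" using exp_ge_add_one_self[of "1/10::real"] by simp
  hence "exp (1/10::real) ^ 10 \<ge> (1 + 1/10) ^ 10" by (intro power_mono) auto
  moreover have "(1 + 1/10::real) ^ 10 > 259/100" by (simp add: power_divide)
  ultimately show ?thesis by linarith
qed

lemma exp_nat: "exp (real m) = exp 1 ^ m"
  using exp_of_nat_mult[of m 1] by simp

lemma exp_numeral: "exp (numeral m :: real) = exp 1 ^ numeral m"
  using exp_nat[of "numeral m"] by simp

lemma N1: "k \<ge> 2 \<Longrightarrow> (2 * real k + 1)^2 < 4 * exp (real k)"
proof (induction k rule: nat_induct_at_least)
  case base
  have "exp (real 2) = exp 1 ^ 2" by (rule exp_nat)
  moreover have "exp 1 ^ 2 > (259/100::real)^2" using e27 by (intro power_strict_mono) auto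
  moreover have "(259/100::real)^2 = 67081/10000" by (simp add: power2_eq_square)
  ultimately show ?case by simp
next
  case (Suc k)
  have kk: "real k * real k \<ge> 2 * real k" using Suc.hyps by (intro mult_right_mono) auto
  have "exp (real (Suc k)) = exp (real k) * exp 1" by (simp add: exp_add[symmetric] add.commute)
  have "(2 * real (Suc k) + 1)^2 = (2*real k + 3)^2" by simp
  also have "\<dots> \<le> 2 * (2 * real k + 1)^2"
  proof -
    have "(2*real k+3)^2 = 4*(real k*real k) + 12*real k + 9" "2*(2*real k+1)^2 = 8*(real k*real k)+8*real k+2"
      by (simp_all add: power2_eq_square algebra_simps)
    thus ?thesis using kk Suc.hyps by linarith
  qed
  also have "\<dots> < 2 * (4 * exp (real k))" using Suc.IH by simp
  also have "\<dots> \<le> exp 1 * (4 * exp (real k))" using e27 by (intro mult_right_mono) auto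
  finally have X: "(2 * real (Suc k) + 1)^2 < exp 1 * (4 * exp (real k))" .
  have "exp 1 * (4 * exp (real k)) = 4 * exp (real (Suc k))"
    using \<open>exp (real (Suc k)) = _\<close> by simp
  thus ?case using X by linarith
qed

lemma N2: assumes "n \<ge> (4::nat)"
  defines "P \<equiv> ((n-2) div 2 + 1)*((n-2) - (n-2) div 2 + 1)"
  shows "real (n-2) * exp (real (n-1)) + exp (real (P-1)) < exp (real P) + 2*exp 2"
proof -
  define e where "e = exp (1::real)"
  have e: "e > 259/100" using e27 e_def by simp
  consider "n = 4" | "n = 5" | "n \<ge> 6" using assms by linarith
  thus ?thesis
  proof cases
    case 1
    hence "P = 4" unfolding P_def by simp
    have "e^2 * ((e - 1) * (e - 2)) > 0" using e by (intro mult_pos_pos) auto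
    hence "3 * e^3 < e^4 + 2*e^2" by (simp add: algebra_simps power2_eq_square power3_eq_cube power4_eq_xxxx)
    thus ?thesis using 1 \<open>P = 4\<close> by (simp add: exp_numeral e_def)
  next
    case 2
    hence "P = 6" unfolding P_def by simp
    have "e * (e - 1) > 259/100 * (159/100)" using e by (intro mult_strict_mono) auto
    hence "e^4 * (e * (e - 1) - 3) > 0" using e by (intro mult_pos_pos) auto
    hence "3 * e^4 + e^5 < e^6" by (simp add: algebra_simps power2_eq_square power3_eq_cube power4_eq_xxxx numeral_eq_Suc)
    moreover have "e^2 > 0" using e by simp
    ultimately have X: "3 * e^4 + e^5 < e^6 + 2 * e^2" by linarith
    have "?thesis \<longleftrightarrow> 3 * e^4 + e^5 < e^6 + 2 * e^2" using 2 \<open>P = 6\<close> by (simp add: exp_numeral e_def)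
    thus ?thesis using X by simp
  next
    case 3
    define k where "k = (n-2) div 2 + 1"
    have k3: "k \<ge> 3" using 3 unfolding k_def by linarith
    have nk1: "n \<le> 2*k + 1" unfolding k_def using 3 by presburger
    have nk2: "2 * k \<le> n" unfolding k_def using 3 by presburger
    note nk = nk1 nk2
    have "P \<ge> n + k" 
    proof (cases "even n")
      case True
      have "n = 2*k" using True nk by presburger
      hence "(n-2) - (n-2) div 2 + 1 = k" unfolding k_def by presburger
      hence "P = k * k" unfolding P_def k_def by simp
      moreover note \<open>n = 2*k\<close>
      moreover have "k*k \<ge> 3*k" using k3 by simp
      ultimately show ?thesis by simp
    next
      case False
      have "n = 2*k+1" using False nk by presburger
      hence "(n-2) - (n-2) div 2 + 1 = k + 1" unfolding k_def using 3 by presburger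
      hence "P = k * (k+1)" unfolding P_def k_def by simp
      moreover note \<open>n = 2*k+1\<close>
      moreover have "k*k \<ge> 3*k" using k3 by simp
      moreover have "k*(k+1) = k*k+k" by (simp add: algebra_simps)
      ultimately show ?thesis using k3 by linarith
    qed
    have "n-2 < 2 * k" using nk 3 by linarith
    hence "real (n-2) < real (2 * k)" by (simp only: of_nat_less_iff)
    hence "real (n-2) < 2 * real k" by simp
    also have "\<dots> < exp (real k)"
    proof -
      have "real k * real k \<ge> 1 * real k" using k3 by (intro mult_right_mono) auto
      moreover have "(2 * real k + 1)^2 = 4*(real k*real k) + 4 * real k + 1" by (simp add: power2_eq_square algebra_simps)
      ultimately show ?thesis using N1[of k] k3 by linarith
    qed
    finally have "real (n-2) * exp (real (n-1)) < exp (real k) * exp (real (n-1))" by simp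
    also have "\<dots> = exp (real (k + (n-1)))" by (simp add: exp_add)
    also have "\<dots> \<le> exp (real (P-1))" using \<open>P \<ge> n+k\<close> 3 by simp
    finally have A: "real (n-2) * exp (real (n-1)) < exp (real (P-1))" .
    have "exp (real P) = exp 1 * exp (real (P-1))" using \<open>P \<ge> n+k\<close> 3
      by (simp add: exp_add[symmetric] of_nat_diff)
    moreover have "exp 1 * exp (real (P-1)) \<ge> 2 * exp (real (P-1))" using e27 by (intro mult_right_mono) auto
    ultimately show ?thesis using A by (smt (verit) exp_gt_zero)
  qed
qed



lemma L1: "(s::nat) + t \<le> m \<Longrightarrow> 4*(s*t) \<le> m*m"
proof -
  assume h: "s + t \<le> m"
  have "int (4*(s*t)) \<le> int ((s+t)*(s+t))"
  proof -
    have "(int s - int t)^2 \<ge> 0" by simp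
    thus ?thesis by (simp add: power2_eq_square algebra_simps)
  qed
  hence "4*(s*t) \<le> (s+t)*(s+t)" by linarith
  also have "\<dots> \<le> m*m" using h by (intro mult_mono) auto
  finally show ?thesis .
qed

lemma Pfacts:
  fixes n a b :: nat
  assumes n4: "n \<ge> 4" and a: "a = (n-2) div 2" and b: "b = n-2-a"
  shows "a \<ge> 1" "b \<ge> 1" "a + 1 + (b + 1) = n" "b = a \<or> b = a + 1"
    "\<And>s t. s + t \<le> n \<Longrightarrow> s * t \<le> (a+1)*(b+1)"
    "\<And>s t. s + t \<le> n - 1 \<Longrightarrow> s * t \<le> (a+1)*(b+1) - (a+1)"
    "(a+1)*(b+1) \<ge> a + 1"
    "\<And>s t. s + t = n \<Longrightarrow> s * t = (a+1)*(b+1) \<Longrightarrow> s = a+1 \<or> s = b+1"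
proof -
  show basic: "a \<ge> 1" "b \<ge> 1" "a + 1 + (b + 1) = n" "b = a \<or> b = a + 1" using n4 a b by linarith+
  show "(a+1)*(b+1) \<ge> a + 1" by simp
  have div4: "\<forall>x y::nat. 4*x \<le> 4*y+1 \<longrightarrow> x \<le> y" by linarith
  show "s * t \<le> (a+1)*(b+1)" if "s + t \<le> n" for s t
  proof -
    have h: "4*(s*t) \<le> n*n" using L1 that by blast
    show ?thesis
    proof (cases "b = a")
      case True
      hence "n = 2*(a+1)" using basic by arith
      hence "n*n = 4*((a+1)*(b+1))" using True by (simp add: algebra_simps)
      thus ?thesis using h by linarith
    next
      case False
      hence "b = a+1" "n = 2*(a+1)+1" using basic by arith+
      hence "n*n = 4*((a+1)*(b+1)) + 1" by (simp add: algebra_simps)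
      thus ?thesis using h by linarith
    qed
  qed
  show "s * t \<le> (a+1)*(b+1) - (a+1)" if "s + t \<le> n - 1" for s t
  proof -
    have h: "4*(s*t) \<le> (n-1)*(n-1)" using L1 that by blast
    show ?thesis
    proof (cases "b = a")
      case True
      hence "n - 1 = 2*a + 1" using basic by arith
      hence "(n-1)*(n-1) = 4*((a+1)*(b+1) - (a+1)) + 1" using True by (simp add: algebra_simps)
      thus ?thesis using h by linarith
    next
      case False
      hence "b = a+1" "n - 1 = 2*(a+1)" using basic by arith+
      hence "(n-1)*(n-1) = 4*((a+1)*(b+1) - (a+1))" by (simp add: algebra_simps)
      thus ?thesis using h by linarith
    qed
  qed
  show "s = a+1 \<or> s = b+1" if "s + t = n" "s * t = (a+1)*(b+1)" for s t
  proof -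
    have nn: "int s + int t = int (a+1) + int (b+1)" using that(1) \<open>a + 1 + (b + 1) = n\<close> by linarith
    have pp: "int s * int t = int (a+1) * int (b+1)" using that(2) by (metis of_nat_mult)
    have "(int s - int (a+1)) * (int s - int (b+1)) = int s * int s - int s * (int (a+1) + int (b+1)) + int (a+1) * int (b+1)"
      by (simp add: algebra_simps)
    also have "\<dots> = int s * int s - int s * (int s + int t) + int s * int t" using nn pp by simp
    also have "\<dots> = 0" by (simp add: algebra_simps)
    finally have "int s = int (a+1) \<or> int s = int (b+1)" by simp
    thus ?thesis by linarith
  qed
qed

lemma N3: assumes n4: "n \<ge> (4::nat)" and a: "a = (n-2) div 2" and b: "b = n-2-a"
  shows "real n * (exp (real ((a+1)*(b+1) - (a+1))) * real n / 4) < exp (real ((a+1)*(b+1))) + 2*exp 2"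
proof -
  note basic = Pfacts(1-4)[OF n4 a b]
  have k2: "a + 1 \<ge> 2" and nle: "n \<le> 2*(a+1)+1" using basic by arith+
  have "real n \<le> 2 * real (a+1) + 1" using nle by linarith
  hence "real n * real n \<le> (2 * real (a+1) + 1)^2" using n4 by (simp add: power2_eq_square mult_mono)
  also have "\<dots> < 4 * exp (real (a+1))" using N1[OF k2] .
  finally have A: "real n * real n < 4 * exp (real (a+1))" .
  have E: "exp (real ((a+1)*(b+1) - (a+1))) * exp (real (a+1)) = exp (real ((a+1)*(b+1)))"
    by (simp add: exp_add[symmetric] of_nat_diff)
  have "real n * (exp (real ((a+1)*(b+1) - (a+1))) * real n / 4) = exp (real ((a+1)*(b+1) - (a+1))) * (real n * real n) / 4"
    by (simp add: algebra_simps)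
  also have "\<dots> < exp (real ((a+1)*(b+1) - (a+1))) * (4 * exp (real (a+1))) / 4"
    using A by (intro divide_strict_right_mono mult_strict_left_mono) auto
  also have "\<dots> = exp (real ((a+1)*(b+1)))" using E by simp
  finally show ?thesis by (smt (verit) exp_gt_zero)
qed



lemma rtr_sym: "(adj E)\<^sup>*\<^sup>* u v \<Longrightarrow> (adj E)\<^sup>*\<^sup>* v u"
proof (induction rule: rtranclp_induct)
  case base thus ?case by simp
next
  case (step y z)
  have "adj E z y" using step(2) adj_sym by metis
  thus ?case using step(3) by (meson converse_rtranclp_into_rtranclp)
qed

lemma no_cycle_if:
  assumes h: "\<And>x y z. adj E x y \<Longrightarrow> adj E x z \<Longrightarrow> y \<noteq> z \<Longrightarrow> x = c1 \<or> x = c2"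
  shows "\<not> is_cycle E vs"
proof
  assume c: "is_cycle E vs"
  define L where "L = length vs"
  have L3: "L \<ge> 3" and dist: "distinct vs" using c unfolding is_cycle_def L_def by auto
  have step: "\<And>i. Suc i < L \<Longrightarrow> adj E (vs!i) (vs!Suc i)" using c unfolding is_cycle_def L_def by auto
  have nn: "vs \<noteq> []" using L3 unfolding L_def by auto
  have cl: "adj E (vs!(L-1)) (vs!0)" using c nn unfolding is_cycle_def L_def
    by (simp add: hd_conv_nth last_conv_nth)
  have ne: "\<And>i j. i < L \<Longrightarrow> j < L \<Longrightarrow> i \<noteq> j \<Longrightarrow> vs!i \<noteq> vs!j"
    using dist unfolding L_def by (simp add: nth_eq_iff_index_eq)
  have a0: "vs!0 = c1 \<or> vs!0 = c2"
  proof (rule h[of _ "vs!1" "vs!(L-1)"])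
    show "adj E (vs ! 0) (vs ! 1)" using step[of 0] L3 by simp
    show "adj E (vs ! 0) (vs ! (L-1))" using cl adj_sym by metis
    show "vs ! 1 \<noteq> vs ! (L-1)" using ne L3 by auto
  qed
  have a1: "vs!1 = c1 \<or> vs!1 = c2"
  proof (rule h[of _ "vs!0" "vs!2"])
    have "adj E (vs ! 0) (vs ! 1)" using step[of 0] L3 by simp
    thus "adj E (vs ! 1) (vs ! 0)" using adj_sym by metis
    show "adj E (vs ! 1) (vs ! 2)" using step[of 1] L3 by (simp add: numeral_2_eq_2)
    show "vs ! 0 \<noteq> vs ! 2" using ne L3 by auto
  qed
  have a2: "vs!(L-1) = c1 \<or> vs!(L-1) = c2"
  proof (rule h[of _ "vs!(L-2)" "vs!0"])
    have sl: "Suc (L-2) = L-1" using L3 by auto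
    have "adj E (vs!(L-2)) (vs!(Suc (L-2)))" by (rule step) (use L3 in linarith)
    hence "adj E (vs!(L-2)) (vs!(L-1))" unfolding sl .
    thus "adj E (vs ! (L-1)) (vs ! (L-2))" using adj_sym by metis
    show "adj E (vs ! (L-1)) (vs ! 0)" using cl .
    show "vs ! (L-2) \<noteq> vs ! 0" using ne L3 by auto
  qed
  have "vs!0 \<noteq> vs!1" "vs!0 \<noteq> vs!(L-1)" "vs!1 \<noteq> vs!(L-1)" using ne L3 by auto
  thus False using a0 a1 a2 by auto
qed

lemma ds_mem: "e \<in> double_star_edges a b \<longleftrightarrow>
   (\<exists>i. e = {0,i} \<and> 1 \<le> i \<and> i \<le> a+1) \<or> (\<exists>j. e = {a+1,j} \<and> a+2 \<le> j \<and> j \<le> a+b+1)"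
  unfolding double_star_edges_def by auto

lemma ds_tree: assumes "a \<ge> 1" "b \<ge> 1" "n = a + b + 2"
  shows "is_tree {0..<n} (double_star_edges a b)"
proof -
  let ?E = "double_star_edges a b"
  have sg: "simple_graph {0..<n} ?E"
    unfolding simple_graph_def using assms
    apply (auto simp: ds_mem)
    apply (rule_tac x=0 in exI, rule_tac x=i in exI, simp)
    apply (rule_tac x="Suc a" in exI, rule_tac x=j in exI, simp)
    done
  have to0: "(adj ?E)\<^sup>*\<^sup>* v 0" if vV: "v \<in> {0..<n}" for v
  proof -
    consider "v = 0" | "1 \<le> v \<and> v \<le> a+1" | "a+2 \<le> v \<and> v \<le> a+b+1" using vV assms by force
    thus ?thesis
    proof cases
      case 1 thus ?thesis by simp
    next
      case 2
      hence "adj ?E v 0" unfolding adj_def ds_mem by (auto simp: insert_commute)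
      thus ?thesis by auto
    next
      case 3
      hence "adj ?E v (a+1)" unfolding adj_def ds_mem by (auto simp: insert_commute)
      moreover have "adj ?E (a+1) 0" unfolding adj_def ds_mem by (auto simp: insert_commute)
      ultimately show ?thesis by (meson converse_rtranclp_into_rtranclp rtranclp.rtrancl_refl)
    qed
  qed
  have conn: "connected_graph {0..<n} ?E"
    unfolding connected_graph_def using to0 rtr_sym by (meson rtranclp_trans)
  have nc: "\<not> is_cycle ?E vs" for vs
  proof (rule no_cycle_if[of _ 0 "a+1"])
    fix x y z assume xy: "adj ?E x y" and xz: "adj ?E x z" and yz: "y \<noteq> z"
    show "x = 0 \<or> x = a+1"
    proof (rule ccontr)
      assume nx: "\<not> (x = 0 \<or> x = a+1)"
      have "\<And>w. adj ?E x w \<Longrightarrow> w = (if x \<le> a+1 then 0 else a+1)"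
        using nx unfolding adj_def ds_mem by (auto simp: doubleton_eq_iff)
      thus False using xy xz yz by metis
    qed
  qed
  show ?thesis unfolding is_tree_def using sg conn nc assms by auto
qed

lemma prod2: "x \<noteq> y \<Longrightarrow> (\<Prod>v\<in>{x,y}. f v) = f x * (f y :: real)" by simp

lemma ds_expM2: assumes "a \<ge> 1" "b \<ge> 1"
  shows "expM2 (double_star_edges a b) \<ge> exp (real ((a+1)*(b+1))) + 2 * exp 2"
proof -
  let ?E = "double_star_edges a b"
  let ?d = "\<lambda>v. real (degree ?E v)"
  have finE: "finite ?E" unfolding double_star_edges_def by auto
  have d0: "degree ?E 0 \<ge> a+1"
  proof -
    have "(\<lambda>i. {0,i}) ` {1..a+1} \<subseteq> {e\<in>?E. 0 \<in> e}" by (auto simp: ds_mem)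
    moreover have "inj_on (\<lambda>i. {0::nat,i}) {1..a+1}" by (auto simp: inj_on_def doubleton_eq_iff)
    ultimately have "card ((\<lambda>i. {0,i}) ` {1..a+1}) \<le> degree ?E 0" unfolding degree_def
      using finE by (intro card_mono) auto
    thus ?thesis using \<open>inj_on _ _\<close> by (simp add: card_image)
  qed
  have d1: "degree ?E (a+1) \<ge> b+1"
  proof -
    have "insert {0,a+1} ((\<lambda>j. {a+1,j}) ` {a+2..a+b+1}) \<subseteq> {e\<in>?E. a+1 \<in> e}" by (auto simp: ds_mem)
    moreover have "inj_on (\<lambda>j. {a+1,j}) {a+2..a+b+1}" by (auto simp: inj_on_def doubleton_eq_iff)
    moreover have "{0,a+1} \<notin> ((\<lambda>j. {a+1,j}) ` {a+2..a+b+1})" by (auto simp: doubleton_eq_iff)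
    ultimately have "card (insert {0,a+1} ((\<lambda>j. {a+1,j}) ` {a+2..a+b+1})) \<le> degree ?E (a+1)" unfolding degree_def
      using finE by (intro card_mono) auto
    thus ?thesis using \<open>inj_on _ _\<close> \<open>{0,a+1} \<notin> _\<close> by (simp add: card_image)
  qed
  have d2: "degree ?E 1 \<ge> 1" "degree ?E (a+2) \<ge> 1"
  proof -
    have "{0,1} \<in> {e\<in>?E. 1 \<in> e}" "{a+1,a+2} \<in> {e\<in>?E. a+2 \<in> e}" using assms by (auto simp: ds_mem)
    moreover have "finite {e\<in>?E. 1 \<in> e}" "finite {e\<in>?E. a+2 \<in> e}" using finE by auto
    ultimately show "degree ?E 1 \<ge> 1" "degree ?E (a+2) \<ge> 1" unfolding degree_def
      by (metis One_nat_def Suc_leI card_gt_0_iff empty_iff)+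
  qed
  let ?f = "\<lambda>e. exp (\<Prod>v\<in>e. ?d v)"
  have sub: "{{0,a+1},{0,1},{a+1,a+2}} \<subseteq> ?E" using assms by (auto simp: ds_mem)
  have "?f {0,a+1} + ?f {0,1} + ?f {a+1,a+2} = sum ?f {{0,a+1},{0,1},{a+1,a+2}}"
    using assms by (simp add: doubleton_eq_iff)
  also have "\<dots> \<le> sum ?f ?E" using sub finE by (intro sum_mono2) auto
  finally have S: "?f {0,a+1} + ?f {0,1} + ?f {a+1,a+2} \<le> expM2 ?E" unfolding expM2_def .
  have "?f {0,a+1} = exp (?d 0 * ?d (a+1))" by simp
  also have "\<dots> \<ge> exp (real ((a+1)*(b+1)))"
  proof -
    have X: "real (a+1) * real (b+1) \<le> ?d 0 * ?d (a+1)" using d0 d1 by (intro mult_mono) auto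
    show ?thesis unfolding exp_le_cancel_iff of_nat_mult using X .
  qed
  finally have f1: "?f {0,a+1} \<ge> exp (real ((a+1)*(b+1)))" .
  have f2: "?f {0,1} \<ge> exp 2"
  proof -
    have "?f {0,1} = exp (?d 0 * ?d 1)" by simp
    moreover have "2 * 1 \<le> ?d 0 * ?d 1" using d0 d2 assms by (intro mult_mono) auto
    ultimately show ?thesis by simp
  qed
  have f3: "?f {a+1,a+2} \<ge> exp 2"
  proof -
    have "?f {a+1,a+2} = exp (?d (a+1) * ?d (a+2))" by simp
    moreover have "2 * 1 \<le> ?d (a+1) * ?d (a+2)" using d1 d2 assms by (intro mult_mono) auto
    ultimately show ?thesis by simp
  qed
  show ?thesis using S f1 f2 f3 by linarith
qed



lemma T3a: assumes t: "is_tree V E" and uv: "adj E u v"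
  and eq: "card {y. adj E u y} + card {y. adj E v y} = card V"
  shows "{y. adj E u y} \<union> {y. adj E v y} = V"
proof -
  have s: "simple_graph V E" using tree_simple[OF t] .
  have fV: "finite V" using s unfolding simple_graph_def by simp
  have sub: "{y. adj E u y} \<union> {y. adj E v y} \<subseteq> V" using adj_in_V[OF s] by auto
  have "card ({y. adj E u y} \<union> {y. adj E v y}) = card V"
    using T1[OF t uv] finite_N[OF s] eq by (simp add: card_Un_disjoint)
  thus ?thesis using card_subset_eq[OF fV sub] by simp
qed

lemma edge_adj: "simple_graph V E \<Longrightarrow> e \<in> E \<Longrightarrow> \<exists>x y. e = {x,y} \<and> adj E x y"
proof -
  assume s: "simple_graph V E" and e: "e \<in> E"
  then obtain u v where "e = {u,v}" "u \<noteq> v" unfolding simple_graph_def by blast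
  thus ?thesis using e unfolding adj_def by blast
qed


lemma side: assumes t: "is_tree V E" and uv: "adj E u v"
  and eq: "card {y. adj E u y} + card {y. adj E v y} = card V"
  shows "(\<Sum>e\<in>{e\<in>E. u \<in> e} - {{u,v}}. exp (\<Prod>w\<in>e. real (degree E w)))
     \<le> real (degree E u - 1) * exp (real (degree E u))"
proof -
  have s: "simple_graph V E" using tree_simple[OF t] .
  have finE: "finite E" using finite_E[OF s] .
  have uvE: "{u,v} \<in> {e\<in>E. u \<in> e}" using uv unfolding adj_def by auto
  have card: "card ({e\<in>E. u \<in> e} - {{u,v}}) = degree E u - 1"
    unfolding degree_def using uvE finE by (simp add: card_Diff_singleton)
  have "(\<Sum>e\<in>{e\<in>E. u \<in> e} - {{u,v}}. exp (\<Prod>w\<in>e. real (degree E w)))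
     \<le> real (card ({e\<in>E. u \<in> e} - {{u,v}})) * exp (real (degree E u))"
  proof (rule sum_bounded_above)
    fix e assume e: "e \<in> {e\<in>E. u \<in> e} - {{u,v}}"
    then obtain x y where xy: "e = {x,y}" "adj E x y" using edge_adj[OF s] by blast
    have "u = x \<or> u = y" using e xy by auto
    then obtain w where w: "e = {u,w}" "adj E u w"
    proof
      assume "u = x" thus ?thesis using that xy by auto
    next
      assume "u = y" thus ?thesis using that[of x] xy adj_sym by (metis insert_commute)
    qed
    have wv: "w \<noteq> v" using w e by auto
    have "{y. adj E w y} = {u}" using T4[OF t uv eq w(2) wv] .
    hence dw: "degree E w = 1" using degree_eq[OF s] by simp
    have "u \<noteq> w" using w(2) unfolding adj_def by auto
    hence "(\<Prod>z\<in>e. real (degree E z)) = real (degree E u)" using w(1) dw by simp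
    thus "exp (\<Prod>z\<in>e. real (degree E z)) \<le> exp (real (degree E u))" by simp
  qed
  thus ?thesis using card by simp
qed

lemma caseA: assumes t: "is_tree V E" and uv: "adj E u v"
  and eq: "card {y. adj E u y} + card {y. adj E v y} = card V"
  shows "expM2 E \<le> exp (real (degree E u) * real (degree E v))
     + real (degree E u - 1) * exp (real (degree E u)) + real (degree E v - 1) * exp (real (degree E v))"
proof -
  have s: "simple_graph V E" using tree_simple[OF t] .
  have finE: "finite E" using finite_E[OF s] .
  let ?f = "\<lambda>e. exp (\<Prod>w\<in>e. real (degree E w))"
  let ?Eu = "{e\<in>E. u \<in> e}" and ?Ev = "{e\<in>E. v \<in> e}"
  have vu: "adj E v u" using uv adj_sym by metis
  have eq': "card {y. adj E v y} + card {y. adj E u y} = card V" using eq by simp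
  have U: "E = ?Eu \<union> ?Ev"
  proof
    show "E \<subseteq> ?Eu \<union> ?Ev"
    proof
      fix e assume "e \<in> E"
      then obtain x y where "e = {x,y}" "adj E x y" using edge_adj[OF s] by blast
      thus "e \<in> ?Eu \<union> ?Ev" using T3[OF t uv eq] \<open>e \<in> E\<close> by auto
    qed
  qed auto
  have uvE: "{u,v} \<in> E" using uv unfolding adj_def by auto
  have uvne: "u \<noteq> v" using uv unfolding adj_def by auto
  have fuv: "?f {u,v} = exp (real (degree E u) * real (degree E v))" using uvne by simp
  have "expM2 E = sum ?f ?Eu + sum ?f ?Ev - sum ?f (?Eu \<inter> ?Ev)"
    unfolding expM2_def using finE by (subst U) (simp add: sum_Un)
  also have "sum ?f (?Eu \<inter> ?Ev) \<ge> ?f {u,v}"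
    using uvE finE by (intro member_le_sum) auto
  hence "sum ?f ?Eu + sum ?f ?Ev - sum ?f (?Eu \<inter> ?Ev) \<le> sum ?f ?Eu + sum ?f ?Ev - ?f {u,v}" by simp
  also have "sum ?f ?Eu = ?f {u,v} + sum ?f (?Eu - {{u,v}})"
    using uvE finE by (subst sum.remove[of _ "{u,v}"]) auto
  also have "sum ?f ?Ev = ?f {u,v} + sum ?f (?Ev - {{u,v}})"
    using uvE finE by (subst sum.remove[of _ "{u,v}"]) auto
  also have "?Ev - {{u,v}} = ?Ev - {{v,u}}" by (simp add: insert_commute)
  finally have "expM2 E \<le> ?f {u,v} + sum ?f (?Eu - {{u,v}}) + sum ?f (?Ev - {{v,u}})" by simp
  thus ?thesis using side[OF t uv eq] side[OF t vu eq'] fuv by linarith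
qed



lemma deg_pos: "simple_graph V E \<Longrightarrow> e \<in> E \<Longrightarrow> x \<in> e \<Longrightarrow> degree E x \<ge> 1"
proof -
  assume s: "simple_graph V E" and e: "e \<in> E" "x \<in> e"
  have "finite {e\<in>E. x \<in> e}" using finite_E[OF s] by auto
  moreover have "{e\<in>E. x \<in> e} \<noteq> {}" using e by auto
  ultimately show ?thesis unfolding degree_def by (simp add: Suc_leI card_gt_0_iff)
qed

lemma caseB: assumes t: "is_tree V E"
  and h: "\<And>x y. adj E x y \<Longrightarrow> degree E x * degree E y \<le> Q \<and>
             4 * (degree E x * degree E y) \<le> (degree E x + degree E y) * card V"
  shows "expM2 E \<le> real (card V) * (exp (real Q) * real (card V) / 4)"
proof -
  have s: "simple_graph V E" using tree_simple[OF t] .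
  have finE: "finite E" using finite_E[OF s] .
  have fV: "finite V" using s unfolding simple_graph_def by simp
  let ?d = "\<lambda>v. real (degree E v)"
  define C where "C = exp (real Q) * real (card V) / 4"
  have C0: "C \<ge> 0" unfolding C_def by simp
  have per: "exp (\<Prod>v\<in>e. ?d v) \<le> C * (\<Sum>v\<in>e. 1 / ?d v)" if e: "e \<in> E" for e
  proof -
    obtain x y where xy: "e = {x,y}" "adj E x y" using edge_adj[OF s e] by blast
    have xne: "x \<noteq> y" using xy unfolding adj_def by auto
    have dx: "degree E x \<ge> 1" "degree E y \<ge> 1" using deg_pos[OF s e] xy by auto
    have hh: "degree E x * degree E y \<le> Q" "4 * (degree E x * degree E y) \<le> (degree E x + degree E y) * card V"
      using h[OF xy(2)] by auto
    define p where "p = ?d x * ?d y"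
    define sm where "sm = ?d x + ?d y"
    have p0: "p > 0" unfolding p_def using dx by simp
    have pQ: "p \<le> real Q" unfolding p_def using hh(1) by (metis of_nat_le_iff of_nat_mult)
    have ps: "4 * p \<le> sm * real (card V)" unfolding p_def sm_def using hh(2)
      by (metis of_nat_le_iff of_nat_mult of_nat_add of_nat_numeral)
    have sum: "(\<Sum>v\<in>e. 1 / ?d v) = sm / p" unfolding sm_def p_def using xy(1) xne dx
      by (simp add: field_simps)
    have prod: "(\<Prod>v\<in>e. ?d v) = p" unfolding p_def using xy(1) xne by simp
    have "exp p \<le> exp (real Q)" using pQ by simp
    also have "\<dots> \<le> exp (real Q) * (sm * real (card V) / (4 * p))"
    proof -
      have "1 \<le> sm * real (card V) / (4 * p)" using ps p0 by simp
      from mult_left_mono[OF this, of "exp (real Q)"] show ?thesis by simp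
    qed
    also have "\<dots> = C * (sm / p)" unfolding C_def by (simp add: field_simps)
    finally show ?thesis using sum prod by simp
  qed
  have "expM2 E \<le> (\<Sum>e\<in>E. C * (\<Sum>v\<in>e. 1 / ?d v))" unfolding expM2_def using per by (rule sum_mono)
  also have "\<dots> = C * (\<Sum>e\<in>E. \<Sum>v\<in>e. 1 / ?d v)" by (simp add: sum_distrib_left)
  finally have A: "expM2 E \<le> C * (\<Sum>e\<in>E. \<Sum>v\<in>e. 1 / ?d v)" .
  have "(\<Sum>e\<in>E. \<Sum>v\<in>e. 1 / ?d v) = (\<Sum>e\<in>E. \<Sum>v\<in>{v. v \<in> V \<and> v \<in> e}. 1 / ?d v)"
  proof (rule sum.cong)
    fix e assume "e \<in> E"
    hence "e \<subseteq> V" using s unfolding simple_graph_def by auto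
    hence "{v. v \<in> V \<and> v \<in> e} = e" by auto
    thus "(\<Sum>v\<in>e. 1 / ?d v) = (\<Sum>v\<in>{v. v \<in> V \<and> v \<in> e}. 1 / ?d v)" by simp
  qed simp
  also have "\<dots> = (\<Sum>v\<in>V. \<Sum>e\<in>{e. e \<in> E \<and> v \<in> e}. 1 / ?d v)"
    using finE fV by (rule sum.swap_restrict)
  also have "\<dots> = (\<Sum>v\<in>V. ?d v * (1 / ?d v))"
    by (rule sum.cong) (simp_all add: degree_def)
  also have "\<dots> \<le> (\<Sum>v\<in>V. 1)" by (rule sum_mono) simp
  also have "\<dots> = real (card V)" by simp
  finally have "(\<Sum>e\<in>E. \<Sum>v\<in>e. 1 / ?d v) \<le> real (card V)" .
  from mult_left_mono[OF this C0] A have "expM2 E \<le> C * real (card V)" by linarith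
  thus ?thesis unfolding C_def by (simp add: algebra_simps)
qed



lemma ds_mem2: "{p,q} \<in> double_star_edges a b \<longleftrightarrow>
   (p = 0 \<and> 1 \<le> q \<and> q \<le> a+1) \<or> (q = 0 \<and> 1 \<le> p \<and> p \<le> a+1) \<or>
   (p = a+1 \<and> a+2 \<le> q \<and> q \<le> a+b+1) \<or> (q = a+1 \<and> a+2 \<le> p \<and> p \<le> a+b+1)"
  unfolding ds_mem by (auto simp: doubleton_eq_iff)

lemma edge_iff: "simple_graph V E \<Longrightarrow> {x,y} \<in> E \<longleftrightarrow> adj E x y"
proof -
  assume s: "simple_graph V E"
  have "{x,x} \<notin> E"
  proof
    assume "{x,x} \<in> E"
    then obtain p q where "{x,x} = {p,q}" "p \<noteq> q" using s unfolding simple_graph_def by blast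
    thus False by (auto simp: doubleton_eq_iff)
  qed
  thus ?thesis unfolding adj_def by auto
qed

lemma ISO: assumes t: "is_tree {0..<n} E" and uv: "adj E u v"
  and du: "card {y. adj E u y} = a + 1" and dv: "card {y. adj E v y} = b + 1"
  and nab: "n = a + b + 2"
  shows "graph_iso {0..<n} E {0..<n} (double_star_edges a b)"
proof -
  let ?V = "{0..<n}"
  let ?Nu = "{y. adj E u y}" and ?Nv = "{y. adj E v y}"
  have s: "simple_graph ?V E" using tree_simple[OF t] .
  have eq: "card ?Nu + card ?Nv = card ?V" using du dv nab by simp
  have U: "?Nu \<union> ?Nv = ?V" using T3a[OF t uv eq] .
  have D: "?Nu \<inter> ?Nv = {}" using T1[OF t uv] .
  have vNu: "v \<in> ?Nu" using uv by simp
  have uNv: "u \<in> ?Nv" using uv adj_sym by (metis mem_Collect_eq)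
  have uNu: "u \<notin> ?Nu" "v \<notin> ?Nv" unfolding adj_def by auto
  define A where "A = ?Nu - {v}"
  define B where "B = ?Nv - {u}"
  have fNu: "finite ?Nu" "finite ?Nv" using finite_N[OF s] by auto
  have cA: "card A = a" unfolding A_def using du vNu fNu by (simp add: card_Diff_singleton)
  have cB: "card B = b" unfolding B_def using dv uNv fNu by (simp add: card_Diff_singleton)
  obtain g where g: "bij_betw g A {1..a}"
    using finite_same_card_bij[of A "{1..a}"] cA fNu unfolding A_def by auto
  obtain h where h: "bij_betw h B {a+2..a+b+1}"
    using finite_same_card_bij[of B "{a+2..a+b+1}"] cB fNu unfolding B_def by auto
  define f where "f x = (if x = u then 0 else if x = v then a+1 else if x \<in> A then g x else h x)" for x
  have NuA: "?Nu = insert v A" unfolding A_def using vNu by auto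
  have NvB: "?Nv = insert u B" unfolding B_def using uNv by auto
  have AB: "A \<inter> B = {}" "u \<notin> A" "v \<notin> A" "u \<notin> B" "v \<notin> B"
    unfolding A_def B_def using D uNu by auto
  have Vc: "x \<in> ?V \<longleftrightarrow> x = u \<or> x = v \<or> x \<in> A \<or> x \<in> B" for x
    using U NuA NvB by auto
  have gr: "x \<in> A \<Longrightarrow> g x \<in> {1..a}" for x using g by (auto simp: bij_betw_def)
  have hr: "x \<in> B \<Longrightarrow> h x \<in> {a+2..a+b+1}" for x using h by (auto simp: bij_betw_def)
  have uvne: "u \<noteq> v" using uv unfolding adj_def by auto
  have fu: "f u = 0" and fv: "f v = a + 1" using AB uvne unfolding f_def by auto
  have fA: "x \<in> A \<Longrightarrow> f x = g x" for x using AB unfolding f_def by auto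
  have fB: "x \<in> B \<Longrightarrow> f x = h x" for x using AB unfolding f_def by auto
  have R0: "f x = 0 \<longleftrightarrow> x = u" if "x \<in> ?V" for x
    using that Vc fu fv fA fB gr hr by force
  have R1: "(1 \<le> f x \<and> f x \<le> a+1) \<longleftrightarrow> x \<in> ?Nu" if "x \<in> ?V" for x
    using that Vc fu fv fA fB gr hr NuA AB by force
  have R2: "f x = a+1 \<longleftrightarrow> x = v" if "x \<in> ?V" for x
    using that Vc fu fv fA fB gr hr by force
  have R3: "(a+2 \<le> f x \<and> f x \<le> a+b+1) \<longleftrightarrow> x \<in> B" if "x \<in> ?V" for x
    using that Vc fu fv fA fB gr hr by force
  have injg: "inj_on g A" and injh: "inj_on h B" using g h by (auto simp: bij_betw_def)
  have inj: "inj_on f ?V"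
  proof (rule inj_onI)
    fix x y assume x: "x \<in> ?V" and y: "y \<in> ?V" and fxy: "f x = f y"
    consider "x = u" | "x = v" | "x \<in> A" | "x \<in> B" using Vc[of x] x by blast
    thus "x = y"
    proof cases
      case 1 thus ?thesis using fxy fu R0[OF y] by metis
    next
      case 2 thus ?thesis using fxy fv R2[OF y] by metis
    next
      case 3
      have gx: "1 \<le> f x" "f x \<le> a" using gr[OF 3] unfolding fA[OF 3] by auto
      have "y \<in> A"
      proof -
        have "y \<noteq> u" using fxy gx fu by (metis not_one_le_zero)
        moreover have "y \<noteq> v" using fxy gx fv by (metis add_le_same_cancel1 not_one_le_zero)
        moreover have "y \<notin> B"
        proof
          assume yB: "y \<in> B"
          have "f y \<ge> a + 2" using hr[OF yB] unfolding fB[OF yB] by auto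
          thus False using fxy gx by linarith
        qed
        ultimately show ?thesis using Vc[of y] y by blast
      qed
      thus ?thesis using 3 fxy fA injg by (simp add: inj_on_def)
    next
      case 4
      have hx: "a + 2 \<le> f x" using hr[OF 4] unfolding fB[OF 4] by auto
      have "y \<in> B"
      proof -
        have "y \<noteq> u"
        proof
          assume "y = u" hence "f y = 0" using fu by simp
          thus False using fxy hx by linarith
        qed
        moreover have "y \<noteq> v"
        proof
          assume "y = v" hence "f y = a + 1" using fv by simp
          thus False using fxy hx by linarith
        qed
        moreover have "y \<notin> A"
        proof
          assume yA: "y \<in> A"
          have "f y \<le> a" using gr[OF yA] unfolding fA[OF yA] by auto
          thus False using fxy hx by linarith
        qed
        ultimately show ?thesis using Vc[of y] y by blast
      qed
      thus ?thesis using 4 fxy fB injh by (simp add: inj_on_def)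
    qed
  qed
  have sub: "f ` ?V \<subseteq> ?V"
  proof
    fix z assume "z \<in> f ` ?V"
    then obtain x where x: "x \<in> ?V" "z = f x" by auto
    consider "x = u" | "x = v" | "x \<in> A" | "x \<in> B" using Vc[of x] x by blast
    thus "z \<in> ?V"
    proof cases
      case 1 thus ?thesis using x fu nab by simp
    next
      case 2 thus ?thesis using x fv nab by simp
    next
      case 3 thus ?thesis using x fA[of x] gr[of x] nab by auto
    next
      case 4 thus ?thesis using x fB[of x] hr[of x] nab by auto
    qed
  qed
  have "card (f ` ?V) = card ?V" using card_image[OF inj] .
  hence img: "f ` ?V = ?V" using card_subset_eq[OF _ sub] by simp
  have bij: "bij_betw f ?V ?V" unfolding bij_betw_def using inj img by simp
  have adjc: "adj E x y \<longleftrightarrow> (x = u \<and> y \<in> ?Nu) \<or> (y = u \<and> x \<in> ?Nu) \<or> (x = v \<and> y \<in> ?Nv) \<or> (y = v \<and> x \<in> ?Nv)" for x y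
  proof
    assume a: "adj E x y"
    hence "x \<in> {u,v} \<or> y \<in> {u,v}" using T3[OF t uv eq] by auto
    thus "(x = u \<and> y \<in> ?Nu) \<or> (y = u \<and> x \<in> ?Nu) \<or> (x = v \<and> y \<in> ?Nv) \<or> (y = v \<and> x \<in> ?Nv)"
      using a adj_sym by (metis insert_iff mem_Collect_eq singletonD)
  next
    assume "(x = u \<and> y \<in> ?Nu) \<or> (y = u \<and> x \<in> ?Nu) \<or> (x = v \<and> y \<in> ?Nv) \<or> (y = v \<and> x \<in> ?Nv)"
    thus "adj E x y" using adj_sym by (metis mem_Collect_eq)
  qed
  have edges: "{x, y} \<in> E \<longleftrightarrow> {f x, f y} \<in> double_star_edges a b" if x: "x \<in> ?V" and y: "y \<in> ?V" for x y
  proof -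
    have "{x, y} \<in> E \<longleftrightarrow> adj E x y" using edge_iff[OF s] .
    also have "\<dots> \<longleftrightarrow> (x = u \<and> y \<in> ?Nu) \<or> (y = u \<and> x \<in> ?Nu) \<or> (x = v \<and> y \<in> ?Nv) \<or> (y = v \<and> x \<in> ?Nv)"
      using adjc .
    also have "\<dots> \<longleftrightarrow> (f x = 0 \<and> 1 \<le> f y \<and> f y \<le> a+1) \<or> (f y = 0 \<and> 1 \<le> f x \<and> f x \<le> a+1) \<or>
       (f x = a+1 \<and> a+2 \<le> f y \<and> f y \<le> a+b+1) \<or> (f y = a+1 \<and> a+2 \<le> f x \<and> f x \<le> a+b+1)"
      using R0[OF x] R0[OF y] R1[OF x] R1[OF y] R2[OF x] R2[OF y] R3[OF x] R3[OF y] NvB AB vNu uNu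
      by auto
    also have "\<dots> \<longleftrightarrow> {f x, f y} \<in> double_star_edges a b" using ds_mem2 by simp
    finally show ?thesis .
  qed
  show ?thesis unfolding graph_iso_def using bij edges by blast
qed



theorem theorem1:
  fixes n :: nat and E :: "nat set set"
  assumes "n \<ge> 4"
    and "is_tree {0..<n} E"
    and "\<not> graph_iso {0..<n} E {0..<n}
            (double_star_edges ((n - 2) div 2) ((n - 2) - (n - 2) div 2))"
  shows "\<exists>E'. is_tree {0..<n} E' \<and> expM2 E' > expM2 E"
proof -
  define a where "a = (n-2) div 2"
  define b where "b = (n-2) - (n-2) div 2"
  have bdef: "b = n-2-a" unfolding a_def b_def ..
  note PF = Pfacts[OF assms(1) a_def bdef]
  have t: "is_tree {0..<n} E" using assms(2) .
  have s: "simple_graph {0..<n} E" using tree_simple[OF t] .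
  have niso: "\<not> graph_iso {0..<n} E {0..<n} (double_star_edges a b)" using assms(3) unfolding a_def b_def .
  have T': "is_tree {0..<n} (double_star_edges a b)" using ds_tree[OF PF(1) PF(2)] PF(3) by simp
  have L: "expM2 (double_star_edges a b) \<ge> exp (real ((a+1)*(b+1))) + 2*exp 2"
    using ds_expM2[OF PF(1) PF(2)] .
  have cardV: "card {0..<n} = n" by simp
  have key: "expM2 E < exp (real ((a+1)*(b+1))) + 2*exp 2"
  proof (cases "\<exists>u v. adj E u v \<and> card {y. adj E u y} + card {y. adj E v y} = n")
    case True
    then obtain u v where uv: "adj E u v" and eq: "card {y. adj E u y} + card {y. adj E v y} = n" by blast
    have vu: "adj E v u" using uv adj_sym by metis
    have eqV: "card {y. adj E u y} + card {y. adj E v y} = card {0..<n}" using eq by simp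
    have du: "degree E u = card {y. adj E u y}" and dv: "degree E v = card {y. adj E v y}"
      using degree_eq[OF s] by auto
    have du1: "degree E u \<ge> 1" and dv1: "degree E v \<ge> 1"
      using deg_pos[OF s, of "{u,v}"] uv unfolding adj_def by auto
    have prodle: "degree E u * degree E v \<le> (a+1)*(b+1)" using PF(5)[of "degree E u" "degree E v"] eq du dv by simp
    show ?thesis
    proof (cases "degree E u * degree E v = (a+1)*(b+1)")
      case True
      hence "degree E u = a+1 \<or> degree E u = b+1" using PF(8)[of "degree E u" "degree E v"] eq du dv by simp
      hence "graph_iso {0..<n} E {0..<n} (double_star_edges a b)"
      proof
        assume h: "degree E u = a+1"
        hence "degree E v = b+1" using eq du dv PF(3) by simp
        thus ?thesis using ISO[OF t uv, of a b] h du dv PF(3) by simp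
      next
        assume h: "degree E u = b+1"
        hence "degree E v = a+1" using eq du dv PF(3) by simp
        thus ?thesis using ISO[OF t vu, of a b] h du dv PF(3) by simp
      qed
      thus ?thesis using niso by contradiction
    next
      case False
      hence pl: "degree E u * degree E v \<le> (a+1)*(b+1) - 1" using prodle by simp
      have A: "expM2 E \<le> exp (real (degree E u) * real (degree E v))
       + real (degree E u - 1) * exp (real (degree E u)) + real (degree E v - 1) * exp (real (degree E v))"
        using caseA[OF t uv eqV] .
      have B1: "exp (real (degree E u) * real (degree E v)) \<le> exp (real ((a+1)*(b+1) - 1))"
      proof -
        have "real (degree E u * degree E v) \<le> real ((a+1)*(b+1) - 1)" using pl by (simp only: of_nat_le_iff)
        thus ?thesis by simp
      qed
      have ule: "degree E u \<le> n - 1" "degree E v \<le> n - 1" using eq du dv du1 dv1 by linarith+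
      have B2: "real (degree E u - 1) * exp (real (degree E u)) \<le> real (degree E u - 1) * exp (real (n-1))"
        using ule by (intro mult_left_mono) auto
      have B3: "real (degree E v - 1) * exp (real (degree E v)) \<le> real (degree E v - 1) * exp (real (n-1))"
        using ule by (intro mult_left_mono) auto
      have B4: "real (degree E u - 1) + real (degree E v - 1) = real (n - 2)" using eq du dv du1 dv1 by simp
      have "expM2 E \<le> exp (real ((a+1)*(b+1) - 1)) + real (n-2) * exp (real (n-1))"
      proof -
        have "real (n-2) * exp (real (n-1)) = real (degree E u - 1) * exp (real (n-1)) + real (degree E v - 1) * exp (real (n-1))"
          unfolding B4[symmetric] by (rule distrib_right)
        thus ?thesis using A B1 B2 B3 by linarith
      qed
      also have "\<dots> < exp (real ((a+1)*(b+1))) + 2*exp 2"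
        using N2[OF assms(1)] unfolding a_def b_def by simp
      finally show ?thesis .
    qed
  next
    case False
    have h: "degree E x * degree E y \<le> (a+1)*(b+1) - (a+1) \<and>
             4 * (degree E x * degree E y) \<le> (degree E x + degree E y) * card {0..<n}" if xy: "adj E x y" for x y
    proof -
      have dx: "degree E x = card {y. adj E x y}" "degree E y = card {z. adj E y z}" using degree_eq[OF s] by auto
      have le: "degree E x + degree E y \<le> n" using T2[OF t xy] dx by simp
      moreover have "degree E x + degree E y \<noteq> n" using False xy dx by auto
      ultimately have "degree E x + degree E y \<le> n - 1" by simp
      hence "degree E x * degree E y \<le> (a+1)*(b+1) - (a+1)" using PF(6) by blast
      moreover have "4 * (degree E x * degree E y) \<le> (degree E x + degree E y) * (degree E x + degree E y)"
        using L1 by blast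
      moreover have "(degree E x + degree E y) * (degree E x + degree E y) \<le> (degree E x + degree E y) * card {0..<n}"
        using le by simp
      ultimately show ?thesis by linarith
    qed
    have "expM2 E \<le> real (card {0..<n}) * (exp (real ((a+1)*(b+1) - (a+1))) * real (card {0..<n}) / 4)"
      using caseB[OF t h] by blast
    also have "\<dots> < exp (real ((a+1)*(b+1))) + 2*exp 2"
      using N3[OF assms(1) a_def bdef] by simp
    finally show ?thesis .
  qed
  show ?thesis using T' L key by (intro exI[of _ "double_star_edges a b"]) auto
qed

end
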